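(* Let $n$ and $m$ be positive integers and $0<\theta\le 1$, and put $\phi = m(1-\theta)/\theta$. Then for every $x\in\{0,1,\dots,n\}$, $$\binom{n}{x}\theta^x(1-\theta)^{n-x} = \sum_{k=0}^{x}\mathrm{Spillage}(x-k\mid n,k,\phi)\cdot \mathrm{Occ}(k\mid n,m,\theta).$$
   Context: $S(j,k)$ denotes the (central) Stirling numbers of the second kind and $(m)_k = m(m-1)\cdots(m-k+1)$ the falling factorial. The noncentral Stirling numbers of the second kind are $S(n,k,\phi) = \sum_{r=0}^{n-k}\binom{n}{k+r}\phi^{n-k-r}S(k+r,k)$. The spillage mass function, for $0\le k\le n$ and $0<\phi<\infty$, is $\mathrm{Spillage}(r\mid n,k,\phi) = \binom{n}{k+r}\phi^{n-k-r}S(k+r,k)/S(n,k,\phi)$ for $r=0,\dots,n-k$; for $\phi=0$ it is by convention the point mass $\mathrm{Spillage}(r\mid n,k,0)=\mathbb{I}(r=n-k)$. The (extended) occupancy mass function is $\mathrm{Occ}(k\mid n,m,\theta) = \frac{\theta^n}{m^n}(m)_k\,S\!\left(n,k,m\frac{1-\theta}{\theta}\right)$ for $k=0,\dots,n$ (for $\theta=1$ this reads $(m)_kS(n,k)/m^n$). *)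

theory Defs
  imports "HOL-Analysis.Analysis" "HOL-Combinatorics.Stirling"
begin

definition falling_fact :: "real \<Rightarrow> nat \<Rightarrow> real" where
  "falling_fact m k = (\<Prod>i<k. m - real i)"

definition ncStirling :: "nat \<Rightarrow> nat \<Rightarrow> real \<Rightarrow> real" where
  "ncStirling n k \<phi> =
     (\<Sum>r\<in>{0..n-k}. real (n choose (k + r)) * \<phi> ^ (n - k - r) * real (Stirling (k + r) k))"

definition spillage :: "nat \<Rightarrow> nat \<Rightarrow> nat \<Rightarrow> real \<Rightarrow> real" where
  "spillage r n k \<phi> =
     (if \<phi> = 0 then (if r = n - k then 1 else 0)
      else real (n choose (k + r)) * \<phi> ^ (n - k - r) * real (Stirling (k + r) k) / ncStirling n k \<phi>)"

definition occ :: "nat \<Rightarrow> nat \<Rightarrow> nat \<Rightarrow> real \<Rightarrow> real" where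
  "occ k n m \<theta> =
     \<theta> ^ n / real m ^ n * falling_fact (real m) k * ncStirling n k (real m * (1 - \<theta>) / \<theta>)"

end

theory Submission
  imports Defs
begin

lemma ff_Suc: "falling_fact m (Suc k) = falling_fact m k * (m - real k)"
  by (simp add: falling_fact_def)

lemma ff_zero: "falling_fact m 0 = 1"
  by (simp add: falling_fact_def)

lemma stirling_ff: "(\<Sum>k\<le>x. real (Stirling x k) * falling_fact m k) = m ^ x"
proof (induction x)
  case 0
  then show ?case by (simp add: ff_zero)
next
  case (Suc x)
  let ?S = "\<lambda>k. real (Stirling x k)" and ?f = "falling_fact m"
  have A: "(\<Sum>k\<le>Suc x. real (Stirling (Suc x) k) * ?f k)
      = (\<Sum>k\<le>x. real (Stirling (Suc x) (Suc k)) * ?f (Suc k))"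
    by (subst sum.atMost_Suc_shift) simp
  also have "\<dots> = (\<Sum>k\<le>x. real (Suc k) * ?S (Suc k) * ?f (Suc k)) + (\<Sum>k\<le>x. ?S k * ?f (Suc k))"
    by (simp add: sum.distrib algebra_simps)
  also have "(\<Sum>k\<le>x. real (Suc k) * ?S (Suc k) * ?f (Suc k)) = (\<Sum>k\<le>Suc x. real k * ?S k * ?f k)"
    using sum.atMost_Suc_shift[of "\<lambda>k. real k * ?S k * ?f k" x] by simp
  also have "\<dots> = (\<Sum>k\<le>x. real k * ?S k * ?f k)"
    by simp
  also have "(\<Sum>k\<le>x. ?S k * ?f (Suc k)) = m * (\<Sum>k\<le>x. ?S k * ?f k) - (\<Sum>k\<le>x. real k * ?S k * ?f k)"
    by (simp add: ff_Suc sum_distrib_left sum_subtractf[symmetric] algebra_simps)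
  finally show ?case using Suc by simp
qed

lemma ncS_zero: "k \<le> n \<Longrightarrow> ncStirling n k 0 = real (Stirling n k)"
proof -
  assume k: "k \<le> n"
  have "ncStirling n k 0 = (\<Sum>r\<in>{0..n-k}. if r = n - k then real (Stirling n k) else 0)"
    unfolding ncStirling_def
    by (rule sum.cong) (use k in auto)
  also have "\<dots> = real (Stirling n k)" by simp
  finally show ?thesis .
qed

lemma term_eq:
  fixes n m x k :: nat and \<theta> :: real
  assumes "0 < m" and "0 < \<theta>" and "\<theta> \<le> 1" and "x \<le> n" and "k \<le> x"
  defines "\<phi> \<equiv> real m * (1 - \<theta>) / \<theta>"
  shows "spillage (x - k) n k \<phi> * occ k n m \<theta> =
     real (n choose x) * \<phi> ^ (n - x) * real (Stirling x k) * (\<theta> ^ n / real m ^ n * falling_fact (real m) k)"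
proof (cases "\<phi> = 0")
  case True
  then have th: "\<theta> = 1" using assms by (simp add: \<phi>_def)
  show ?thesis
  proof (cases "x = n")
    case True
    then show ?thesis using assms(4,5) \<open>\<phi> = 0\<close> unfolding spillage_def occ_def
      by (simp add: th ncS_zero)
  next
    case False
    then have "x - k \<noteq> n - k" using assms(4,5) by arith
    moreover have "n - x > 0" using False assms(4) by simp
    ultimately show ?thesis using \<open>\<phi> = 0\<close> unfolding spillage_def by simp
  qed
next
  case False
  define N where "N = ncStirling n k \<phi>"
  define T where "T = real (n choose x) * \<phi> ^ (n - x) * real (Stirling x k)"
  have phipos: "\<phi> \<ge> 0" using assms by (simp add: \<phi>_def)
  have TN: "T \<le> N" and T0: "0 \<le> T"
  proof -
    have "T = real (n choose (k + (x-k))) * \<phi> ^ (n - k - (x-k)) * real (Stirling (k + (x-k)) k)"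
      using assms by (simp add: T_def)
    also have "\<dots> \<le> N" unfolding N_def ncStirling_def
      by (rule member_le_sum) (use assms phipos in auto)
    finally show "T \<le> N" .
    show "0 \<le> T" using phipos by (simp add: T_def)
  qed
  have sp: "spillage (x - k) n k \<phi> = T / N"
    using False assms(4,5) by (simp add: spillage_def T_def N_def)
  have oc: "occ k n m \<theta> = \<theta> ^ n / real m ^ n * falling_fact (real m) k * N"
    by (simp add: occ_def N_def \<phi>_def)
  show ?thesis
  proof (cases "N = 0")
    case True
    then have "T = 0" using TN T0 by simp
    then show ?thesis using True sp oc by (simp add: T_def[symmetric])
  next
    case False
    then show ?thesis using sp oc by (simp add: T_def[symmetric])
  qed
qed

theorem theorem4:
  fixes n m x :: nat and \<theta> :: real
  assumes "0 < n" and "0 < m" and "0 < \<theta>" and "\<theta> \<le> 1" and "x \<le> n"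
  shows "real (n choose x) * \<theta> ^ x * (1 - \<theta>) ^ (n - x) =
         (\<Sum>k = 0..x. spillage (x - k) n k (real m * (1 - \<theta>) / \<theta>) * occ k n m \<theta>)"
proof -
  define \<phi> where "\<phi> = real m * (1 - \<theta>) / \<theta>"
  have "(\<Sum>k = 0..x. spillage (x - k) n k \<phi> * occ k n m \<theta>)
     = (\<Sum>k = 0..x. real (n choose x) * \<phi> ^ (n - x) * (\<theta> ^ n / real m ^ n) * (real (Stirling x k) * falling_fact (real m) k))"
    by (rule sum.cong) (use assms in \<open>auto simp: term_eq \<phi>_def\<close>)
  also have "\<dots> = real (n choose x) * \<phi> ^ (n - x) * (\<theta> ^ n / real m ^ n) * real m ^ x"
    by (simp only: sum_distrib_left[symmetric] atMost_atLeast0[symmetric] stirling_ff)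
  also have "\<dots> = real (n choose x) * \<theta> ^ x * (1 - \<theta>) ^ (n - x)"
  proof -
    have n: "n = x + (n - x)" using assms by simp
    have "\<phi> ^ (n - x) * (\<theta> ^ n / real m ^ n) * real m ^ x
        = (real m * (1 - \<theta>)) ^ (n - x) / \<theta> ^ (n-x) * (\<theta> ^ x * \<theta> ^ (n-x) / (real m ^ x * real m ^ (n-x))) * real m ^ x"
      by (subst (1 2) n) (simp add: \<phi>_def power_divide power_add)
    also have "\<dots> = \<theta> ^ x * (1 - \<theta>) ^ (n - x)"
      using assms by (simp only: power_mult_distrib) (simp add: field_simps)
    finally have H: "\<phi> ^ (n - x) * (\<theta> ^ n / real m ^ n) * real m ^ x = \<theta> ^ x * (1 - \<theta>) ^ (n - x)" .
    show ?thesis using H by (simp only: mult.assoc)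
  qed
  finally show ?thesis by (simp add: \<phi>_def)
qed

end
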